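(* Let $N\geq 2$ be an integer and consider $2N+1$ qubits $a_1,\dots,a_{2N+1}$. Define the $(2N+1)$-qubit graph state $$|h_{2N+1}\rangle = CZ_{(1,2)}\,CZ_{(1,N+2)}\prod_{k=3}^{N+1}\Big[CZ_{(2,k)}\,CZ_{(k,N+2)}\,CZ_{(k,k+N)}\Big]\,|+\rangle^{\otimes(2N+1)},$$ equivalently $$|h_{2N+1}\rangle=\frac{1}{2^N\sqrt{2}}\sum_{q_1,\dots,q_{2N+1}\in\{0,1\}}(-1)^{f(q_1,\dots,q_{2N+1})}|q_1,q_2,\dots,q_{2N+1}\rangle,$$ where $f(q)=q_1q_2\oplus q_1q_{N+2}\oplus\bigoplus_{k=3}^{N+1}\big(q_2q_k\oplus q_kq_{N+2}\oplus q_kq_{k+N}\big)$ (with $\oplus$ addition mod 2). Then the geometric measure of entanglement of $|h_{2N+1}\rangle$ equals $N$, i.e. $G(|h_{2N+1}\rangle\langle h_{2N+1}|)=N$.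
   Context: $|+\rangle=(|0\rangle+|1\rangle)/\sqrt2$. $CZ_{(j_1,j_2)}$ denotes the two-qubit controlled-$Z$ gate $\mathrm{diag}(1,1,1,-1)$ acting on qubits $a_{j_1},a_{j_2}$ (identity elsewhere). For a pure state $\rho$ on $(\mathbb{C}^2)^{\otimes(2N+1)}$, $\Lambda^2(\rho)=\max_{|\varphi\rangle}\langle\varphi|\rho|\varphi\rangle$, where the maximum is over fully product pure states $|\varphi\rangle=|\varphi_1\rangle\otimes\cdots\otimes|\varphi_{2N+1}\rangle$, and the geometric measure of entanglement is $G(\rho)=-2\log_2\Lambda(\rho)$. *)

theory Defs
  imports "HOL-Analysis.Analysis"
begin

text \<open>Computational basis of n qubits a_1..a_n: bit strings q with q j for j in {1..n}.\<close>
definition basis :: "nat \<Rightarrow> (nat \<Rightarrow> bool) set" where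
  "basis n = {1..n} \<rightarrow>\<^sub>E (UNIV :: bool set)"

text \<open>A pure state on n qubits is given by its amplitudes psi q, q in basis n.
  A single-qubit pure state is a pair (alpha, beta) = alpha|0> + beta|1> of norm 1.\<close>
definition product_state :: "nat \<Rightarrow> (nat \<Rightarrow> complex \<times> complex) \<Rightarrow> bool" where
  "product_state n \<phi> \<longleftrightarrow>
     (\<forall>j\<in>{1..n}. (cmod (fst (\<phi> j)))^2 + (cmod (snd (\<phi> j)))^2 = 1)"

definition product_amp :: "nat \<Rightarrow> (nat \<Rightarrow> complex \<times> complex) \<Rightarrow> (nat \<Rightarrow> bool) \<Rightarrow> complex" where
  "product_amp n \<phi> q = (\<Prod>j\<in>{1..n}. if q j then snd (\<phi> j) else fst (\<phi> j))"

definition overlap :: "nat \<Rightarrow> (nat \<Rightarrow> complex \<times> complex) \<Rightarrow> ((nat \<Rightarrow> bool) \<Rightarrow> complex) \<Rightarrow> complex" where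
  "overlap n \<phi> \<psi> = (\<Sum>q\<in>basis n. cnj (product_amp n \<phi> q) * \<psi> q)"

text \<open>Lambda^2(rho) for rho = |psi><psi|: max over product states of
  <phi|rho|phi> = |<phi|psi>|^2.\<close>
definition Lambda_sq :: "nat \<Rightarrow> ((nat \<Rightarrow> bool) \<Rightarrow> complex) \<Rightarrow> real" where
  "Lambda_sq n \<psi> = Sup {(cmod (overlap n \<phi> \<psi>))^2 | \<phi>. product_state n \<phi>}"

definition geometric_measure :: "nat \<Rightarrow> ((nat \<Rightarrow> bool) \<Rightarrow> complex) \<Rightarrow> real" where
  "geometric_measure n \<psi> = - 2 * log 2 (sqrt (Lambda_sq n \<psi>))"

definition hf :: "nat \<Rightarrow> (nat \<Rightarrow> bool) \<Rightarrow> nat" where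
  "hf N q = (of_bool (q 1 \<and> q 2) + of_bool (q 1 \<and> q (N+2))
      + (\<Sum>k=3..N+1. of_bool (q 2 \<and> q k) + of_bool (q k \<and> q (N+2)) + of_bool (q k \<and> q (k+N)))) mod 2"

definition h_state :: "nat \<Rightarrow> (nat \<Rightarrow> bool) \<Rightarrow> complex" where
  "h_state N q = (1 / (2^N * sqrt 2)) * (-1) ^ hf N q"

end

theory Submission
  imports Defs
begin


definition sg :: "bool \<Rightarrow> complex" where "sg b = (if b then -1 else 1)"
definition cv :: "(nat \<Rightarrow> complex \<times> complex) \<Rightarrow> nat \<Rightarrow> bool \<Rightarrow> complex" where
  "cv \<phi> j b = (if b then cnj (snd (\<phi> j)) else cnj (fst (\<phi> j)))"

lemma cnj_amp: "cnj (product_amp n \<phi> q) = (\<Prod>j\<in>{1..n}. cv \<phi> j (q j))"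
  unfolding product_amp_def cv_def by (simp add: if_distrib)

lemma sign_hf: "(-1::complex) ^ hf N q = sg (q 1 \<and> q 2) * sg (q 1 \<and> q (N+2)) *
   (\<Prod>k\<in>{3..N+1}. sg (q 2 \<and> q k) * sg (q k \<and> q (N+2)) * sg (q k \<and> q (k+N)))"
proof -
  have m: "(-1::complex) ^ (m mod 2) = (-1) ^ m" for m
    by (simp add: minus_one_power_iff)
  have s: "(-1::complex) ^ (of_bool b) = sg b" for b by (simp add: sg_def)
  show ?thesis unfolding hf_def m power_add power_sum s by (simp add: prod.distrib)
qed

lemma prod_split:
  fixes F :: "nat \<Rightarrow> 'a::comm_monoid_mult"
  assumes "N \<ge> 2"
  shows "(\<Prod>j\<in>{1..2*N+1}. F j) = F 1 * F 2 * F (N+2) * (\<Prod>k\<in>{3..N+1}. F k) * (\<Prod>k\<in>{3..N+1}. F (k+N))"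
proof -
  have e: "{1..2*N+1} = insert 1 (insert 2 (insert (N+2) ({3..N+1} \<union> (\<lambda>k. k+N) ` {3..N+1})))"
  proof (intro set_eqI iffI)
    fix i assume "i \<in> {1..2*N+1}"
    then show "i \<in> insert 1 (insert 2 (insert (N+2) ({3..N+1} \<union> (\<lambda>k. k+N) ` {3..N+1})))"
      by (auto simp: image_iff intro!: bexI[of _ "i - N"])
  qed (use assms in auto)
  have d: "{3..N+1} \<inter> (\<lambda>k. k+N) ` {3..N+1} = {}" by auto
  have i: "inj_on (\<lambda>k. k+N) {3..N+1}" by (auto simp: inj_on_def)
  have u: "(\<Prod>j\<in>{3..N+1} \<union> (\<lambda>k. k+N) ` {3..N+1}. F j) = (\<Prod>k\<in>{3..N+1}. F k) * (\<Prod>k\<in>{3..N+1}. F (k+N))"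
    by (subst prod.union_disjoint[OF _ _ d], simp, simp, subst prod.reindex[OF i], simp add: o_def)
  define U where "U = {3..N+1} \<union> (\<lambda>k. k+N) ` {3..N+1}"
  have fU: "finite U" "1 \<notin> U" "2 \<notin> U" "N+2 \<notin> U" using assms by (auto simp: U_def)
  have "(\<Prod>j\<in>{1..2*N+1}. F j) = F 1 * (F 2 * (F (N+2) * prod F U))"
    unfolding e U_def[symmetric] using fU assms by simp
  then show ?thesis unfolding U_def u by (simp add: mult.assoc)
qed

definition Jm :: "nat \<Rightarrow> bool \<times> bool \<times> bool \<times> (nat \<Rightarrow> bool \<times> bool) \<Rightarrow> nat \<Rightarrow> bool" where
  "Jm N t = (case t of (a,x,y,p) \<Rightarrow> (\<lambda>i. if i = 1 then a else if i = 2 then x else if i = N+2 then y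
     else if i \<in> {3..N+1} then fst (p i) else if i \<in> {N+3..2*N+1} then snd (p (i-N)) else undefined))"

definition Iq :: "nat \<Rightarrow> (nat \<Rightarrow> bool) \<Rightarrow> bool \<times> bool \<times> bool \<times> (nat \<Rightarrow> bool \<times> bool)" where
  "Iq N q = (q 1, q 2, q (N+2), (\<lambda>k. if k \<in> {3..N+1} then (q k, q (k+N)) else undefined))"

definition Dom :: "nat \<Rightarrow> (bool \<times> bool \<times> bool \<times> (nat \<Rightarrow> bool \<times> bool)) set" where
  "Dom N = UNIV \<times> UNIV \<times> UNIV \<times> PiE {3..N+1} (\<lambda>_. UNIV)"

lemma sum_reindex:
  assumes N: "N \<ge> 2"
  shows "(\<Sum>t\<in>Dom N. H (Jm N t)) = (\<Sum>q\<in>basis (2*N+1). H q)"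
proof (rule sum.reindex_bij_witness[where j = "Jm N" and i = "Iq N"])
  fix t assume t: "t \<in> Dom N"
  obtain a x y p where tt: "t = (a,x,y,p)" by (cases t) auto
  have p: "p \<in> PiE {3..N+1} (\<lambda>_. UNIV)" using t tt by (auto simp: Dom_def)
  show "Iq N (Jm N t) = t" unfolding tt Iq_def Jm_def using N p
    by (auto intro!: ext simp: PiE_def extensional_def)
  show "Jm N t \<in> basis (2*N+1)" unfolding tt basis_def Jm_def using N
    by (auto simp: PiE_def extensional_def)
next
  fix q assume q: "q \<in> basis (2*N+1)"
  show "Iq N q \<in> Dom N"
    by (auto simp: Dom_def Iq_def PiE_def extensional_def)
  show "Jm N (Iq N q) = q"
  proof
    fix i
    show "Jm N (Iq N q) i = q i"
      using q N by (auto simp: Jm_def Iq_def basis_def PiE_def extensional_def)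
  qed
qed simp

definition g1 :: "(nat \<Rightarrow> complex \<times> complex) \<Rightarrow> complex \<Rightarrow> complex" where
  "g1 \<phi> s = cv \<phi> 1 False + s * cv \<phi> 1 True"
definition gk :: "(nat \<Rightarrow> complex \<times> complex) \<Rightarrow> nat \<Rightarrow> nat \<Rightarrow> complex \<Rightarrow> complex" where
  "gk \<phi> N k s = cv \<phi> k False * (cv \<phi> (k+N) False + cv \<phi> (k+N) True)
     + s * (cv \<phi> k True * (cv \<phi> (k+N) False - cv \<phi> (k+N) True))"

definition L1 where "L1 \<phi> a x y = cv \<phi> 1 a * sg (a \<and> x) * sg (a \<and> y)"
definition Lk where "Lk \<phi> N k x y pr = cv \<phi> k (fst pr) * cv \<phi> (k+N) (snd pr) * sg (x \<and> fst pr) * sg (fst pr \<and> y) * sg (fst pr \<and> snd pr)"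

lemma sumL1: "(\<Sum>a\<in>UNIV. L1 \<phi> a x y) = g1 \<phi> (sg x * sg y)"
  by (cases x; cases y) (simp_all add: L1_def g1_def sg_def UNIV_bool)

lemma sumLk: "(\<Sum>pr\<in>UNIV. Lk \<phi> N k x y pr) = gk \<phi> N k (sg x * sg y)"
proof -
  have U: "(UNIV :: (bool \<times> bool) set) = {(False,False),(False,True),(True,False),(True,True)}" by auto
  show ?thesis unfolding U
    by (cases x; cases y) (simp_all add: Lk_def gk_def sg_def algebra_simps)
qed

lemma overlap_formula:
  assumes N: "N \<ge> 2"
  shows "overlap (2*N+1) \<phi> (h_state N) = (1 / (2^N * sqrt 2)) *
    (\<Sum>x\<in>UNIV. \<Sum>y\<in>UNIV. cv \<phi> 2 x * cv \<phi> (N+2) y * g1 \<phi> (sg x * sg y) * (\<Prod>k\<in>{3..N+1}. gk \<phi> N k (sg x * sg y)))"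
proof -
  define C :: complex where "C = 1 / (2^N * sqrt 2)"
  define Psi where "Psi q = (\<Prod>j\<in>{1..2*N+1}. cv \<phi> j (q j)) * (sg (q 1 \<and> q 2) * sg (q 1 \<and> q (N+2)) *
   (\<Prod>k\<in>{3..N+1}. sg (q 2 \<and> q k) * sg (q k \<and> q (N+2)) * sg (q k \<and> q (k+N))))" for q
  define W where "W a x y p = cv \<phi> 2 x * cv \<phi> (N+2) y * L1 \<phi> a x y * (\<Prod>k\<in>{3..N+1}. Lk \<phi> N k x y (p k))" for a x y p
  have 1: "overlap (2*N+1) \<phi> (h_state N) = (\<Sum>q\<in>basis (2*N+1). C * Psi q)"
    unfolding overlap_def h_state_def cnj_amp C_def
    apply (intro sum.cong refl)
    apply (simp only: of_real_mult of_real_power of_real_minus of_real_1)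
    apply (subst sign_hf)
    apply (simp add: Psi_def)
    done
  also have "\<dots> = C * (\<Sum>q\<in>basis (2*N+1). Psi q)" by (simp add: sum_distrib_left)
  also have "(\<Sum>q\<in>basis (2*N+1). Psi q) = (\<Sum>t\<in>Dom N. Psi (Jm N t))"
    using sum_reindex[OF N, of Psi] by simp
  also have "\<dots> = (\<Sum>t\<in>Dom N. case t of (a,x,y,p) \<Rightarrow> W a x y p)"
  proof (intro sum.cong refl)
    fix t assume t: "t \<in> Dom N"
    obtain a x y p where tt: "t = (a,x,y,p)" by (cases t) auto
    have J1: "Jm N t 1 = a" "Jm N t 2 = x" "Jm N t (N+2) = y" using N by (auto simp: tt Jm_def)
    have JK: "Jm N t k = fst (p k)" "Jm N t (k+N) = snd (p k)" if "k \<in> {3..N+1}" for k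
      using N that by (auto simp: tt Jm_def)
    have "Psi (Jm N t) = cv \<phi> 1 a * cv \<phi> 2 x * cv \<phi> (N+2) y * (\<Prod>k\<in>{3..N+1}. cv \<phi> k (fst (p k))) * (\<Prod>k\<in>{3..N+1}. cv \<phi> (k+N) (snd (p k)))
       * (sg (a \<and> x) * sg (a \<and> y) * (\<Prod>k\<in>{3..N+1}. sg (x \<and> fst (p k)) * sg (fst (p k) \<and> y) * sg (fst (p k) \<and> snd (p k))))"
    proof -
      have P1: "(\<Prod>k\<in>{3..N+1}. cv \<phi> k (Jm N t k)) = (\<Prod>k\<in>{3..N+1}. cv \<phi> k (fst (p k)))"
        by (rule prod.cong) (simp_all add: JK)
      have P2: "(\<Prod>k\<in>{3..N+1}. cv \<phi> (k+N) (Jm N t (k+N))) = (\<Prod>k\<in>{3..N+1}. cv \<phi> (k+N) (snd (p k)))"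
        by (rule prod.cong) (simp_all add: JK)
      have P3: "(\<Prod>k\<in>{3..N+1}. sg (x \<and> Jm N t k) * sg (Jm N t k \<and> y) * sg (Jm N t k \<and> Jm N t (k+N)))
         = (\<Prod>k\<in>{3..N+1}. sg (x \<and> fst (p k)) * sg (fst (p k) \<and> y) * sg (fst (p k) \<and> snd (p k)))"
        by (rule prod.cong, simp, simp only: JK J1)
      show ?thesis unfolding Psi_def prod_split[OF N] J1 unfolding P1 P2 P3 by (simp only: mult.assoc)
    qed
    also have "\<dots> = W a x y p"
      unfolding W_def L1_def Lk_def prod.distrib by (simp add: algebra_simps)
    finally show "Psi (Jm N t) = (case t of (a,x,y,p) \<Rightarrow> W a x y p)" by (simp add: tt)
  qed
  also have "\<dots> = (\<Sum>a\<in>UNIV. \<Sum>x\<in>UNIV. \<Sum>y\<in>UNIV. \<Sum>p\<in>PiE {3..N+1} (\<lambda>_. UNIV). W a x y p)"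
    unfolding Dom_def by (simp add: sum.cartesian_product)
  also have "\<dots> = (\<Sum>x\<in>UNIV. \<Sum>y\<in>UNIV. \<Sum>a\<in>UNIV. \<Sum>p\<in>PiE {3..N+1} (\<lambda>_. UNIV). W a x y p)"
    by (subst sum.swap, rule sum.cong[OF refl], rule sum.swap)
  also have "\<dots> = (\<Sum>x\<in>UNIV. \<Sum>y\<in>UNIV. cv \<phi> 2 x * cv \<phi> (N+2) y * g1 \<phi> (sg x * sg y) * (\<Prod>k\<in>{3..N+1}. gk \<phi> N k (sg x * sg y)))"
  proof (intro sum.cong refl)
    fix x y
    have "(\<Sum>p\<in>PiE {3..N+1} (\<lambda>_. UNIV). (\<Prod>k\<in>{3..N+1}. Lk \<phi> N k x y (p k))) = (\<Prod>k\<in>{3..N+1}. \<Sum>pr\<in>UNIV. Lk \<phi> N k x y pr)"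
      by (rule prod_sum_PiE[symmetric]) auto
    then show "(\<Sum>a\<in>UNIV. \<Sum>p\<in>PiE {3..N+1} (\<lambda>_. UNIV). W a x y p) = cv \<phi> 2 x * cv \<phi> (N+2) y * g1 \<phi> (sg x * sg y) * (\<Prod>k\<in>{3..N+1}. gk \<phi> N k (sg x * sg y))"
      unfolding W_def sum_distrib_left[symmetric] sum_distrib_right[symmetric] sumL1 sumLk by simp
  qed
  finally show ?thesis unfolding C_def by simp
qed




lemma cs2: fixes a b c d :: real
  shows "(a*b + c*d)^2 \<le> (a^2 + c^2) * (b^2 + d^2)"
proof -
  have "(a^2+c^2)*(b^2+d^2) - (a*b+c*d)^2 = (a*d - c*b)^2" by (simp add: power2_eq_square algebra_simps)
  then show ?thesis using zero_le_power2[of "a*d - c*b"] by linarith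
qed

lemma par: "(cmod (z + w))^2 + (cmod (z - w))^2 = 2 * ((cmod z)^2 + (cmod w)^2)"
  unfolding cmod_power2 by (simp add: power2_eq_square algebra_simps)

lemma gk_abs:
  fixes c0 c1 d0 d1 :: complex
  assumes c: "(cmod c0)^2 + (cmod c1)^2 = 1" and d: "(cmod d0)^2 + (cmod d1)^2 = 1"
  defines "z \<equiv> c0 * (d0 + d1)" and "w \<equiv> c1 * (d0 - d1)"
  shows "(cmod (z + w))^2 \<le> 2" "(cmod (z - w))^2 \<le> 2" "(cmod (z + w))^2 + (cmod (z - w))^2 \<le> 4"
proof -
  define al where "al = cmod (d0 + d1)"
  define be where "be = cmod (d0 - d1)"
  have ab: "al^2 + be^2 = 2" using par[of d0 d1] d unfolding al_def be_def by simp
  have zn: "cmod z = cmod c0 * al" "cmod w = cmod c1 * be" unfolding z_def w_def al_def be_def by (simp_all add: norm_mult)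
  have cs: "(cmod c0 * al + cmod c1 * be)^2 \<le> 2" using cs2[of "cmod c0" al "cmod c1" be] c ab by simp
  have t1: "cmod (z + w) \<le> cmod c0 * al + cmod c1 * be" using norm_triangle_ineq[of z w] zn by simp
  have t2: "cmod (z - w) \<le> cmod c0 * al + cmod c1 * be" using norm_triangle_ineq4[of z w] zn by simp
  show "(cmod (z + w))^2 \<le> 2" using power_mono[OF t1 norm_ge_zero, of 2] cs by linarith
  show "(cmod (z - w))^2 \<le> 2" using power_mono[OF t2 norm_ge_zero, of 2] cs by linarith
  have c0: "(cmod c0)^2 \<le> 1" "(cmod c1)^2 \<le> 1" using c by (smt (verit) zero_le_power2)+
  have "(cmod (z + w))^2 + (cmod (z - w))^2 = 2 * ((cmod c0)^2 * al^2 + (cmod c1)^2 * be^2)"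
    unfolding par zn by (simp add: power_mult_distrib)
  also have "\<dots> \<le> 2 * (al^2 + be^2)"
    using mult_right_mono[OF c0(1), of "al^2"] mult_right_mono[OF c0(2), of "be^2"] by simp
  finally show "(cmod (z + w))^2 + (cmod (z - w))^2 \<le> 4" using ab by simp
qed

lemma cv_norm: "product_state n \<phi> \<Longrightarrow> j \<in> {1..n} \<Longrightarrow> (cmod (cv \<phi> j False))^2 + (cmod (cv \<phi> j True))^2 = 1"
  unfolding product_state_def cv_def by simp

lemma gk_bounds:
  assumes ps: "product_state (2*N+1) \<phi>" and k: "k \<in> {3..N+1}"
  shows "(cmod (gk \<phi> N k 1))^2 \<le> 2" "(cmod (gk \<phi> N k (-1)))^2 \<le> 2"
    "(cmod (gk \<phi> N k 1))^2 + (cmod (gk \<phi> N k (-1)))^2 \<le> 4"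
proof -
  have c: "(cmod (cv \<phi> k False))^2 + (cmod (cv \<phi> k True))^2 = 1" using cv_norm[OF ps] k by auto
  have d: "(cmod (cv \<phi> (k+N) False))^2 + (cmod (cv \<phi> (k+N) True))^2 = 1" using cv_norm[OF ps] k by auto
  have e1: "gk \<phi> N k 1 = cv \<phi> k False * (cv \<phi> (k+N) False + cv \<phi> (k+N) True) + cv \<phi> k True * (cv \<phi> (k+N) False - cv \<phi> (k+N) True)"
    unfolding gk_def by simp
  have e2: "gk \<phi> N k (-1) = cv \<phi> k False * (cv \<phi> (k+N) False + cv \<phi> (k+N) True) - cv \<phi> k True * (cv \<phi> (k+N) False - cv \<phi> (k+N) True)"
    unfolding gk_def by simp
  show "(cmod (gk \<phi> N k 1))^2 \<le> 2" "(cmod (gk \<phi> N k (-1)))^2 \<le> 2"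
    "(cmod (gk \<phi> N k 1))^2 + (cmod (gk \<phi> N k (-1)))^2 \<le> 4"
    unfolding e1 e2 using gk_abs[OF c d] by auto
qed

lemma g1_bound:
  assumes ps: "product_state (2*N+1) \<phi>"
  shows "(cmod (g1 \<phi> 1))^2 + (cmod (g1 \<phi> (-1)))^2 = 2"
proof -
  have c: "(cmod (cv \<phi> 1 False))^2 + (cmod (cv \<phi> 1 True))^2 = 1" using cv_norm[OF ps] by auto
  have "g1 \<phi> 1 = cv \<phi> 1 False + cv \<phi> 1 True" "g1 \<phi> (-1) = cv \<phi> 1 False - cv \<phi> 1 True"
    unfolding g1_def by simp_all
  then show ?thesis using par[of "cv \<phi> 1 False" "cv \<phi> 1 True"] c by simp
qed

lemma prod_bound:
  assumes N: "N \<ge> 2" and ps: "product_state (2*N+1) \<phi>"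
  shows "(\<Prod>k\<in>{3..N+1}. cmod (gk \<phi> N k 1))^2 + (\<Prod>k\<in>{3..N+1}. cmod (gk \<phi> N k (-1)))^2 \<le> 2^N"
proof -
  define K where "K = {3..N+1}"
  have fK: "finite K" and k3: "3 \<in> K" using N by (auto simp: K_def)
  have cK: "card (K - {3}) = N - 2" using N k3 by (simp add: K_def)
  have rest: "(\<Prod>k\<in>K - {3}. (cmod (gk \<phi> N k s))^2) \<le> 2^(N-2)" if s: "s = 1 \<or> s = -1" for s
  proof -
    have "(\<Prod>k\<in>K - {3}. (cmod (gk \<phi> N k s))^2) \<le> (\<Prod>k\<in>K - {3}. 2)"
      by (rule prod_mono) (use gk_bounds[OF ps] s in \<open>auto simp: K_def\<close>)
    then show ?thesis using cK by simp
  qed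
  have split: "(\<Prod>k\<in>K. cmod (gk \<phi> N k s))^2 = (cmod (gk \<phi> N k' s))^2 * (\<Prod>k\<in>K - {k'}. (cmod (gk \<phi> N k s))^2)" if "k' \<in> K" for s k'
    unfolding prod_power_distrib using prod.remove[OF fK that] by simp
  have b3: "(cmod (gk \<phi> N 3 1))^2 + (cmod (gk \<phi> N 3 (-1)))^2 \<le> 4" using gk_bounds[OF ps] k3 K_def by auto
  have "(\<Prod>k\<in>K. cmod (gk \<phi> N k 1))^2 + (\<Prod>k\<in>K. cmod (gk \<phi> N k (-1)))^2
     \<le> (cmod (gk \<phi> N 3 1))^2 * 2^(N-2) + (cmod (gk \<phi> N 3 (-1)))^2 * 2^(N-2)"
    unfolding split[OF k3] using rest[of 1] rest[of "-1"]
    by (intro add_mono mult_left_mono) auto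
  also have "\<dots> \<le> 4 * 2^(N-2)" using b3 by (simp add: distrib_right[symmetric])
  also have "\<dots> = (2::real)^N"
  proof -
    have "(2::real)^N = 2^(N-2) * 2^2" using N by (metis le_add_diff_inverse2 power_add)
    then show ?thesis by simp
  qed
  finally show ?thesis unfolding K_def .
qed




lemma dot_le1: fixes a0 a1 b0 b1 :: real
  assumes "a0^2 + a1^2 = 1" "b0^2 + b1^2 = 1"
  shows "a0*b0 + a1*b1 \<le> 1"
proof -
  have "0 \<le> (a0-b0)^2 + (a1-b1)^2" by simp
  also have "\<dots> = 2 - 2*(a0*b0 + a1*b1)" using assms by (simp add: power2_eq_square algebra_simps)
  finally show ?thesis by simp
qed

lemma upper:
  assumes N: "N \<ge> 2" and ps: "product_state (2*N+1) \<phi>"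
  shows "(cmod (overlap (2*N+1) \<phi> (h_state N)))^2 \<le> 1/2^N"
proof -
  define m0 where "m0 = cv \<phi> 2 False"
  define m1 where "m1 = cv \<phi> 2 True"
  define n0 where "n0 = cv \<phi> (N+2) False"
  define n1 where "n1 = cv \<phi> (N+2) True"
  define A1 where "A1 = g1 \<phi> 1 * (\<Prod>k\<in>{3..N+1}. gk \<phi> N k 1)"
  define Am where "Am = g1 \<phi> (-1) * (\<Prod>k\<in>{3..N+1}. gk \<phi> N k (-1))"
  define S where "S = (\<Sum>x\<in>UNIV. \<Sum>y\<in>UNIV. cv \<phi> 2 x * cv \<phi> (N+2) y * g1 \<phi> (sg x * sg y) * (\<Prod>k\<in>{3..N+1}. gk \<phi> N k (sg x * sg y)))"
  have ov: "overlap (2*N+1) \<phi> (h_state N) = of_real (1 / (2^N * sqrt 2)) * S"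
    unfolding S_def by (rule overlap_formula[OF N])
  have Sexp: "S = (m0*n0 + m1*n1) * A1 + (m0*n1 + m1*n0) * Am"
    unfolding S_def m0_def m1_def n0_def n1_def A1_def Am_def by (simp add: UNIV_bool sg_def algebra_simps)
  have m: "(cmod m0)^2 + (cmod m1)^2 = 1" unfolding m0_def m1_def using cv_norm[OF ps, of 2] N by simp
  have n: "(cmod n0)^2 + (cmod n1)^2 = 1" unfolding n0_def n1_def using cv_norm[OF ps, of "N+2"] N by simp
  have c1: "cmod (m0*n0 + m1*n1) \<le> 1"
    using norm_triangle_ineq[of "m0*n0" "m1*n1"] dot_le1[OF m n] by (simp add: norm_mult)
  have c2: "cmod (m0*n1 + m1*n0) \<le> 1"
    using norm_triangle_ineq[of "m0*n1" "m1*n0"] dot_le1[OF m, of "cmod n1" "cmod n0"] n by (simp add: norm_mult add.commute)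
  define u0 where "u0 = cmod (g1 \<phi> 1)"
  define u1 where "u1 = cmod (g1 \<phi> (-1))"
  define X where "X = (\<Prod>k\<in>{3..N+1}. cmod (gk \<phi> N k 1))"
  define Y where "Y = (\<Prod>k\<in>{3..N+1}. cmod (gk \<phi> N k (-1)))"
  have nA: "cmod A1 = u0 * X" "cmod Am = u1 * Y" unfolding A1_def Am_def u0_def u1_def X_def Y_def
    by (simp_all add: norm_mult prod_norm)
  have pos: "u0 \<ge> 0" "u1 \<ge> 0" "X \<ge> 0" "Y \<ge> 0" unfolding u0_def u1_def X_def Y_def by (simp_all add: prod_nonneg)
  have "cmod S \<le> cmod (m0*n0 + m1*n1) * cmod A1 + cmod (m0*n1 + m1*n0) * cmod Am"
    unfolding Sexp using norm_triangle_ineq[of "(m0*n0 + m1*n1) * A1" "(m0*n1 + m1*n0) * Am"] by (simp add: norm_mult)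
  also have "\<dots> \<le> 1 * cmod A1 + 1 * cmod Am"
    by (intro add_mono mult_right_mono c1 c2) auto
  finally have Sle: "cmod S \<le> u0 * X + u1 * Y" using nA by simp
  have "(cmod S)^2 \<le> (u0 * X + u1 * Y)^2" using Sle by (simp add: power_mono)
  also have "\<dots> \<le> (u0^2 + u1^2) * (X^2 + Y^2)" by (rule cs2)
  also have "\<dots> = 2 * (X^2 + Y^2)" using g1_bound[OF ps] unfolding u0_def u1_def by simp
  also have "\<dots> \<le> 2 * 2^N" using prod_bound[OF N ps] unfolding X_def Y_def by simp
  finally have S2: "(cmod S)^2 \<le> 2 * 2^N" .
  have "(cmod (overlap (2*N+1) \<phi> (h_state N)))^2 = (cmod S)^2 / (2 * 4^N)"
  proof -
    have a: "cmod (overlap (2*N+1) \<phi> (h_state N)) = (1 / (2^N * sqrt 2)) * cmod S"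
      unfolding ov norm_mult norm_of_real by simp
    have f: "(2::real)^(N*2) = 4^N" by (simp add: mult.commute[of N] power_mult)
    have b: "(1 / (2^N * sqrt 2))^2 = 1 / (2 * (4::real)^N)"
      by (simp add: power_mult_distrib power_divide power_mult[symmetric] mult.commute f)
    show ?thesis unfolding a power_mult_distrib b by simp
  qed
  also have "\<dots> \<le> (2 * 2^N) / (2 * 4^N)" using S2 by (intro divide_right_mono) auto
  also have "\<dots> = 1 / 2^N" by (simp add: field_simps power_mult_distrib[symmetric])
  finally show ?thesis .
qed




definition phi0 :: "nat \<Rightarrow> nat \<Rightarrow> complex \<times> complex" where
  "phi0 N j = (if j = 1 \<or> j \<in> {3..N+1} then (1, 0) else (of_real (1 / sqrt 2), of_real (1 / sqrt 2)))"

lemma phi0_ps: "product_state n (phi0 N)"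
  unfolding product_state_def phi0_def by (simp add: norm_divide power_divide)

lemma lower:
  assumes N: "N \<ge> 2"
  shows "(cmod (overlap (2*N+1) (phi0 N) (h_state N)))^2 = 1/2^N"
proof -
  define c where "c = (of_real (1 / sqrt 2) :: complex)"
  have cv2: "cv (phi0 N) 2 b = c" "cv (phi0 N) (N+2) b = c" for b
    unfolding cv_def phi0_def c_def using N by auto
  have G1: "g1 (phi0 N) s = 1" for s unfolding g1_def cv_def phi0_def by simp
  have GK: "gk (phi0 N) N k s = of_real (sqrt 2)" if k: "k \<in> {3..N+1}" for k s
  proof -
    have "cv (phi0 N) k False = 1" "cv (phi0 N) k True = 0" "cv (phi0 N) (k+N) b = c" for b
      unfolding cv_def phi0_def c_def using k N by auto
    then have "gk (phi0 N) N k s = of_real (2 / sqrt 2)" unfolding gk_def c_def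
      by (simp flip: of_real_add)
    also have "\<dots> = of_real (sqrt 2)" using real_div_sqrt[of 2] by simp
    finally show ?thesis .
  qed
  have P: "(\<Prod>k\<in>{3..N+1}. gk (phi0 N) N k s) = of_real (sqrt 2) ^ (N - 1)" for s
  proof -
    have "(\<Prod>k\<in>{3..N+1}. gk (phi0 N) N k s) = (\<Prod>k\<in>{3..N+1}. (of_real (sqrt 2) :: complex))"
      by (rule prod.cong) (simp_all add: GK)
    then show ?thesis by simp
  qed
  have "overlap (2*N+1) (phi0 N) (h_state N) = of_real (1 / (2^N * sqrt 2)) * (4 * c^2 * of_real (sqrt 2) ^ (N - 1))"
    unfolding overlap_formula[OF N] cv2 G1 P by (simp add: UNIV_bool power2_eq_square)
  also have "\<dots> = of_real (1 / (2^N * sqrt 2) * (4 * (1 / sqrt 2)^2 * sqrt 2 ^ (N - 1)))"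
    unfolding c_def by simp
  finally have ov: "overlap (2*N+1) (phi0 N) (h_state N) = of_real (1 / (2^N * sqrt 2) * (4 * (1 / sqrt 2)^2 * sqrt 2 ^ (N - 1)))" .
  obtain M where M: "N = Suc M" using N by (cases N) auto
  have s: "(sqrt 2 ^ M)^2 = (2::real)^M" by (simp add: power_mult[symmetric] mult.commute[of M] power_mult)
  have f: "(4::real)^n = 2^n * 2^n" for n by (simp add: power_mult_distrib[symmetric])
  have "(cmod (overlap (2*N+1) (phi0 N) (h_state N)))^2 = (1 / (2^N * sqrt 2) * (4 * (1 / sqrt 2)^2 * sqrt 2 ^ (N - 1)))^2"
    unfolding ov norm_of_real by simp
  also have "\<dots> = 1/2^N" unfolding M using s
    by (simp add: power_mult_distrib power_divide f field_simps, simp add: power2_eq_square)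
  finally show ?thesis .
qed

theorem proposition1:
  fixes N :: nat
  assumes "N \<ge> 2"
  shows "geometric_measure (2*N+1) (h_state N) = real N"
proof -
  have L: "Lambda_sq (2*N+1) (h_state N) = 1/2^N"
    unfolding Lambda_sq_def
  proof (rule cSup_eq_maximum)
    show "1/2^N \<in> {(cmod (overlap (2*N+1) \<phi> (h_state N)))^2 | \<phi>. product_state (2*N+1) \<phi>}"
    proof -
      have "\<exists>\<phi>. 1/2^N = (cmod (overlap (2*N+1) \<phi> (h_state N)))^2 \<and> product_state (2*N+1) \<phi>"
        by (intro exI[of _ "phi0 N"] conjI lower[OF assms, symmetric] phi0_ps)
      then show ?thesis by simp
    qed
  next
    fix x assume "x \<in> {(cmod (overlap (2*N+1) \<phi> (h_state N)))^2 | \<phi>. product_state (2*N+1) \<phi>}"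
    then show "x \<le> 1/2^N" using upper[OF assms] by auto
  qed
  have "log 2 (sqrt (1/2^N)) = log 2 (1/2^N) / 2"
    unfolding sqrt_def using log_root[of 2 "1/2^N" 2] by simp
  also have "\<dots> = - real N / 2" by (simp add: log_recip)
  finally show ?thesis unfolding geometric_measure_def L by simp
qed


end
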